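(* The eventual equality relation $E_0$ on $2^\mathbb{N}$ is $\Delta^0_2$-graphable with diameter $2$.
   Context: $xE_0y$ iff there is $m$ with $x(n)=y(n)$ for all $n\ge m$. $E$ is $\Gamma$-graphable with diameter $k$ if there is a simple undirected graph $G$ in $\Gamma$ whose connectedness relation equals $E$ and $k$ is the least integer such that any two $G$-connected points are joined by a path of length at most $k$. *)

theory Defs
  imports "HOL-Analysis.Analysis"
begin

text \<open>Cantor space 2^N is nat => bool with the product topology (bool discrete),
  from HOL-Analysis Function_Topology; pairs carry the product topology.\<close>

definition E0 :: "(nat \<Rightarrow> bool) \<Rightarrow> (nat \<Rightarrow> bool) \<Rightarrow> bool" where
  "E0 x y \<longleftrightarrow> (\<exists>m. \<forall>n\<ge>m. x n = y n)"

definition sigma02 :: "'a::topological_space set \<Rightarrow> bool" where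
  "sigma02 S \<longleftrightarrow> (\<exists>F :: nat \<Rightarrow> 'a set. (\<forall>n. closed (F n)) \<and> S = (\<Union>n. F n))"

definition pi02 :: "'a::topological_space set \<Rightarrow> bool" where
  "pi02 S \<longleftrightarrow> (\<exists>U :: nat \<Rightarrow> 'a set. (\<forall>n. open (U n)) \<and> S = (\<Inter>n. U n))"

definition delta02 :: "'a::topological_space set \<Rightarrow> bool" where
  "delta02 S \<longleftrightarrow> sigma02 S \<and> pi02 S"

definition simple_graph :: "('a \<Rightarrow> 'a \<Rightarrow> bool) \<Rightarrow> bool" where
  "simple_graph G \<longleftrightarrow> (\<forall>x y. G x y \<longrightarrow> G y x) \<and> (\<forall>x. \<not> G x x)"

definition joined :: "('a \<Rightarrow> 'a \<Rightarrow> bool) \<Rightarrow> nat \<Rightarrow> 'a \<Rightarrow> 'a \<Rightarrow> bool" where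
  "joined G n x y \<longleftrightarrow> (\<exists>p :: nat \<Rightarrow> 'a. p 0 = x \<and> p n = y \<and> (\<forall>i<n. G (p i) (p (Suc i))))"

definition graph_connected_rel :: "('a \<Rightarrow> 'a \<Rightarrow> bool) \<Rightarrow> 'a \<Rightarrow> 'a \<Rightarrow> bool" where
  "graph_connected_rel G x y \<longleftrightarrow> (\<exists>n. joined G n x y)"

definition diam_bounded :: "('a \<Rightarrow> 'a \<Rightarrow> bool) \<Rightarrow> nat \<Rightarrow> bool" where
  "diam_bounded G k \<longleftrightarrow> (\<forall>x y. graph_connected_rel G x y \<longrightarrow> (\<exists>n\<le>k. joined G n x y))"

definition has_diameter :: "('a \<Rightarrow> 'a \<Rightarrow> bool) \<Rightarrow> nat \<Rightarrow> bool" where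
  "has_diameter G k \<longleftrightarrow> diam_bounded G k \<and> (\<forall>j<k. \<not> diam_bounded G j)"

definition delta02_graphable_diam :: "(('a::topological_space) \<Rightarrow> 'a \<Rightarrow> bool) \<Rightarrow> nat \<Rightarrow> bool" where
  "delta02_graphable_diam E k \<longleftrightarrow>
     (\<exists>G. simple_graph G \<and> delta02 {(x, y). G x y} \<and> graph_connected_rel G = E \<and> has_diameter G k)"

end

theory Submission
  imports Defs
begin

definition SS :: "nat \<Rightarrow> (nat \<Rightarrow> bool) \<Rightarrow> (nat \<Rightarrow> bool) \<Rightarrow> bool" where
  "SS a z w \<longleftrightarrow> (\<forall>j<a. z j) \<and> \<not> z a \<and> (\<forall>k>a. z k = w k)"

definition RR :: "(nat \<Rightarrow> bool) \<Rightarrow> (nat \<Rightarrow> bool) \<Rightarrow> bool" where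
  "RR z w \<longleftrightarrow> (\<exists>a. SS a z w)"

definition RN :: "nat \<Rightarrow> (nat \<Rightarrow> bool) \<Rightarrow> (nat \<Rightarrow> bool) \<Rightarrow> bool" where
  "RN N z w \<longleftrightarrow> (\<exists>j. \<not> z j) \<and> (\<forall>k\<in>{..N}. z k = w k \<or> (\<forall>j\<in>{..<k}. z j))"

definition Gr :: "(nat \<Rightarrow> bool) \<Rightarrow> (nat \<Rightarrow> bool) \<Rightarrow> bool" where
  "Gr x y \<longleftrightarrow> x \<noteq> y \<and> (RR x y \<or> RR y x)"

lemma RR_RN: "RR z w \<longleftrightarrow> (\<forall>N. RN N z w)"
proof
  assume "RR z w"
  then obtain a where a: "SS a z w" unfolding RR_def by blast
  show "\<forall>N. RN N z w" unfolding RN_def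
  proof (intro allI conjI ballI)
    show "\<exists>j. \<not> z j" using a unfolding SS_def by blast
    fix N k :: nat assume "k \<in> {..N}"
    show "z k = w k \<or> (\<forall>j\<in>{..<k}. z j)"
    proof (cases "k > a")
      case True then show ?thesis using a unfolding SS_def by blast
    next
      case False then show ?thesis using a unfolding SS_def by auto
    qed
  qed
next
  assume H: "\<forall>N. RN N z w"
  then obtain j where j: "\<not> z j" unfolding RN_def by blast
  define a where "a = (LEAST j. \<not> z j)"
  have za: "\<not> z a" unfolding a_def using j by (rule LeastI)
  have lt: "\<forall>j<a. z j" unfolding a_def using not_less_Least by blast
  have "\<forall>k>a. z k = w k"
  proof (intro allI impI)
    fix k assume "k > a"
    with H have "z k = w k \<or> (\<forall>j\<in>{..<k}. z j)" unfolding RN_def by auto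
    with za \<open>k > a\<close> show "z k = w k" by auto
  qed
  then show "RR z w" unfolding RR_def SS_def using za lt by blast
qed

lemma RN_mono: "N \<le> M \<Longrightarrow> RN M z w \<Longrightarrow> RN N z w"
  unfolding RN_def by auto

lemma Gr_Gdelta: "Gr x y \<longleftrightarrow> (\<forall>N. x \<noteq> y \<and> (RN N x y \<or> RN N y x))"
proof
  assume "Gr x y" then show "\<forall>N. x \<noteq> y \<and> (RN N x y \<or> RN N y x)"
    unfolding Gr_def RR_RN by blast
next
  assume H: "\<forall>N. x \<noteq> y \<and> (RN N x y \<or> RN N y x)"
  show "Gr x y"
  proof (cases "RR x y")
    case True then show ?thesis using H unfolding Gr_def by blast
  next
    case False
    then obtain N0 where N0: "\<not> RN N0 x y" unfolding RR_RN by blast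
    have "\<forall>N. RN N y x"
    proof
      fix N
      have "\<not> RN (max N N0) x y" using N0 RN_mono[of N0 "max N N0"] by auto
      then have "RN (max N N0) y x" using H by blast
      then show "RN N y x" using RN_mono[of N "max N N0"] by auto
    qed
    then show ?thesis using H unfolding Gr_def RR_RN by blast
  qed
qed

lemma Gr_Fsigma: "Gr x y \<longleftrightarrow> (\<exists>N. \<exists>a\<in>{..N}. \<exists>i\<in>{..N}. x i \<noteq> y i \<and> (SS a x y \<or> SS a y x))"
proof
  assume "Gr x y"
  then have ne: "x \<noteq> y" and r: "RR x y \<or> RR y x" unfolding Gr_def by auto
  from ne obtain i where i: "x i \<noteq> y i" by blast
  from r obtain a where "SS a x y \<or> SS a y x" unfolding RR_def by blast
  then show "\<exists>N. \<exists>a\<in>{..N}. \<exists>i\<in>{..N}. x i \<noteq> y i \<and> (SS a x y \<or> SS a y x)"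
    using i by (intro exI[of _ "max a i"]) auto
next
  assume "\<exists>N. \<exists>a\<in>{..N}. \<exists>i\<in>{..N}. x i \<noteq> y i \<and> (SS a x y \<or> SS a y x)"
  then show "Gr x y" unfolding Gr_def RR_def by blast
qed

type_synonym pt = "(nat \<Rightarrow> bool) \<times> (nat \<Rightarrow> bool)"

lemma cont_bool_clopen:
  fixes f :: "'a::topological_space \<Rightarrow> bool"
  assumes "continuous_on UNIV f"
  shows "open {p. f p}" "closed {p. f p}"
proof -
  have e: "{p. f p} = f -` {True}" by auto
  have "open {True}" by (rule open_discrete)
  then show "open {p. f p}" unfolding e using assms open_vimage by blast
  have "closed {True}" by simp
  then show "closed {p. f p}" unfolding e using assms closed_vimage by blast
qed

lemma cont_fst: "continuous_on UNIV (\<lambda>p::pt. fst p j)"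
  by (rule continuous_on_product_then_coordinatewise) (intro continuous_intros)

lemma cont_snd: "continuous_on UNIV (\<lambda>p::pt. snd p j)"
  by (rule continuous_on_product_then_coordinatewise) (intro continuous_intros)

definition clopen :: "'a::topological_space set \<Rightarrow> bool" where
  "clopen S \<longleftrightarrow> open S \<and> closed S"

lemma clopen_fst: "clopen {p::pt. fst p j}"
  using cont_bool_clopen[OF cont_fst] unfolding clopen_def by blast
lemma clopen_snd: "clopen {p::pt. snd p j}"
  using cont_bool_clopen[OF cont_snd] unfolding clopen_def by blast

lemma clopen_not: "clopen {x. P x} \<Longrightarrow> clopen {x. \<not> P x}"
  unfolding clopen_def by (auto intro: open_Collect_neg closed_Collect_neg)
lemma clopen_conj: "clopen {x. P x} \<Longrightarrow> clopen {x. Q x} \<Longrightarrow> clopen {x. P x \<and> Q x}"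
  unfolding clopen_def by (auto intro: open_Collect_conj closed_Collect_conj)
lemma clopen_disj: "clopen {x. P x} \<Longrightarrow> clopen {x. Q x} \<Longrightarrow> clopen {x. P x \<or> Q x}"
  unfolding clopen_def by (auto intro: open_Collect_disj closed_Collect_disj)
lemma clopen_eq: "clopen {x. P x} \<Longrightarrow> clopen {x. Q x} \<Longrightarrow> clopen {x. P x = Q x}"
proof -
  assume a: "clopen {x. P x}" "clopen {x. Q x}"
  have e: "{x. P x = Q x} = {x. (P x \<and> Q x) \<or> (\<not> P x \<and> \<not> Q x)}" by auto
  show ?thesis unfolding e by (intro clopen_disj clopen_conj clopen_not a)
qed
lemma clopen_ball: "finite A \<Longrightarrow> (\<And>k. k \<in> A \<Longrightarrow> clopen {x. P k x}) \<Longrightarrow> clopen {x. \<forall>k\<in>A. P k x}"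
proof -
  assume f: "finite A" and h: "\<And>k. k \<in> A \<Longrightarrow> clopen {x. P k x}"
  have e: "{x. \<forall>k\<in>A. P k x} = (\<Inter>k\<in>A. {x. P k x})" by auto
  show ?thesis unfolding e clopen_def using f h unfolding clopen_def
    by (auto intro!: open_INT closed_INT)
qed
lemma clopen_bex: "finite A \<Longrightarrow> (\<And>k. k \<in> A \<Longrightarrow> clopen {x. P k x}) \<Longrightarrow> clopen {x. \<exists>k\<in>A. P k x}"
proof -
  assume f: "finite A" and h: "\<And>k. k \<in> A \<Longrightarrow> clopen {x. P k x}"
  have e: "{x. \<exists>k\<in>A. P k x} = (\<Union>k\<in>A. {x. P k x})" by auto
  show ?thesis unfolding e clopen_def using f h unfolding clopen_def
    by (auto intro!: open_UN closed_UN)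
qed

lemma closed_bex_fin: "finite A \<Longrightarrow> (\<And>k. k \<in> A \<Longrightarrow> closed {x. P k x}) \<Longrightarrow> closed {x. \<exists>k\<in>A. P k x}"
proof -
  assume f: "finite A" and h: "\<And>k. k \<in> A \<Longrightarrow> closed {x. P k x}"
  have e: "{x. \<exists>k\<in>A. P k x} = (\<Union>k\<in>A. {x. P k x})" by auto
  show ?thesis unfolding e using f h by (auto intro!: closed_UN)
qed

lemma closed_SS: "closed {p::pt. SS a (fst p) (snd p)}" "closed {p::pt. SS a (snd p) (fst p)}"
  unfolding SS_def
  by (intro closed_Collect_conj closed_Collect_all closed_Collect_imp closed_Collect_neg
        open_Collect_const cont_bool_clopen cont_fst cont_snd closed_Collect_eq continuous_intros)+

lemma clopen_neq: "clopen {p::pt. fst p i \<noteq> snd p i}"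
  by (intro clopen_not clopen_eq clopen_fst clopen_snd)

lemma open_RN: "open {p::pt. RN N (fst p) (snd p)}" "open {p::pt. RN N (snd p) (fst p)}"
proof -
  have c1: "clopen {p::pt. \<forall>k\<in>{..N}. fst p k = snd p k \<or> (\<forall>j\<in>{..<k}. fst p j)}"
    by (intro clopen_ball clopen_disj clopen_eq clopen_fst clopen_snd finite_atMost finite_lessThan)
  have c2: "clopen {p::pt. \<forall>k\<in>{..N}. snd p k = fst p k \<or> (\<forall>j\<in>{..<k}. snd p j)}"
    by (intro clopen_ball clopen_disj clopen_eq clopen_fst clopen_snd finite_atMost finite_lessThan)
  have o1: "open {p::pt. \<exists>j. \<not> fst p j}"
    using clopen_not[OF clopen_fst] unfolding clopen_def by (intro open_Collect_ex) blast
  have o2: "open {p::pt. \<exists>j. \<not> snd p j}"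
    using clopen_not[OF clopen_snd] unfolding clopen_def by (intro open_Collect_ex) blast
  show "open {p::pt. RN N (fst p) (snd p)}" unfolding RN_def
    using o1 c1 unfolding clopen_def by (intro open_Collect_conj) auto
  show "open {p::pt. RN N (snd p) (fst p)}" unfolding RN_def
    using o2 c2 unfolding clopen_def by (intro open_Collect_conj) auto
qed

lemma test1: "closed {p::pt. \<exists>a\<in>{..N}. \<exists>i\<in>{..N}. fst p i \<noteq> snd p i \<and> (SS a (fst p) (snd p) \<or> SS a (snd p) (fst p))}"
  proof (rule closed_bex_fin[OF finite_atMost], rule closed_bex_fin[OF finite_atMost])
    fix a i
    have c: "closed {p::pt. fst p i \<noteq> snd p i}" using clopen_neq unfolding clopen_def by blast
    show "closed {p::pt. fst p i \<noteq> snd p i \<and> (SS a (fst p) (snd p) \<or> SS a (snd p) (fst p))}"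
      by (rule closed_Collect_conj[OF c closed_Collect_disj[OF closed_SS(1) closed_SS(2)]])
  qed
lemma test2: "open {p::pt. fst p \<noteq> snd p \<and> (RN N (fst p) (snd p) \<or> RN N (snd p) (fst p))}"
proof -
  have e: "{p::pt. fst p \<noteq> snd p} = {p. \<exists>i. fst p i \<noteq> snd p i}" by auto
  have "open {p::pt. fst p \<noteq> snd p}" unfolding e
    using clopen_neq unfolding clopen_def by (intro open_Collect_ex) blast
  then show ?thesis
    by (rule open_Collect_conj[OF _ open_Collect_disj[OF open_RN(1) open_RN(2)]])
qed

lemma eqF: "{(x, y). Gr x y} = (\<Union>N. {p::pt. \<exists>a\<in>{..N}. \<exists>i\<in>{..N}. fst p i \<noteq> snd p i \<and> (SS a (fst p) (snd p) \<or> SS a (snd p) (fst p))})"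
proof (rule set_eqI)
  fix p :: pt
  obtain x y where p: "p = (x,y)" by fastforce
  show "p \<in> {(x, y). Gr x y} \<longleftrightarrow> p \<in> (\<Union>N. {p::pt. \<exists>a\<in>{..N}. \<exists>i\<in>{..N}. fst p i \<noteq> snd p i \<and> (SS a (fst p) (snd p) \<or> SS a (snd p) (fst p))})"
    unfolding p using Gr_Fsigma[of x y] by simp
qed

lemma eqU: "{(x, y). Gr x y} = (\<Inter>N. {p::pt. fst p \<noteq> snd p \<and> (RN N (fst p) (snd p) \<or> RN N (snd p) (fst p))})"
proof (rule set_eqI)
  fix p :: pt
  obtain x y where p: "p = (x,y)" by fastforce
  show "p \<in> {(x, y). Gr x y} \<longleftrightarrow> p \<in> (\<Inter>N. {p::pt. fst p \<noteq> snd p \<and> (RN N (fst p) (snd p) \<or> RN N (snd p) (fst p))})"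
    unfolding p using Gr_Gdelta[of x y] by simp
qed

lemma delta_Gr: "delta02 {(x, y). Gr x y}"
  unfolding delta02_def sigma02_def pi02_def
proof
  show "\<exists>F. (\<forall>n::nat. closed (F n)) \<and> {(x, y). Gr x y} = (\<Union>n. F n)"
  proof (rule exI[where x="\<lambda>N. {p::pt. \<exists>a\<in>{..N}. \<exists>i\<in>{..N}. fst p i \<noteq> snd p i \<and> (SS a (fst p) (snd p) \<or> SS a (snd p) (fst p))}"], rule conjI)
    show "\<forall>n. closed {p::pt. \<exists>a\<in>{..n}. \<exists>i\<in>{..n}. fst p i \<noteq> snd p i \<and> (SS a (fst p) (snd p) \<or> SS a (snd p) (fst p))}"
      by (intro allI test1)
  qed (rule eqF)
  show "\<exists>U. (\<forall>n::nat. open (U n)) \<and> {(x, y). Gr x y} = (\<Inter>n. U n)"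
  proof (rule exI[where x="\<lambda>N. {p::pt. fst p \<noteq> snd p \<and> (RN N (fst p) (snd p) \<or> RN N (snd p) (fst p))}"], rule conjI)
    show "\<forall>n. open {p::pt. fst p \<noteq> snd p \<and> (RN n (fst p) (snd p) \<or> RN n (snd p) (fst p))}"
      by (intro allI test2)
  qed (rule eqU)
qed
lemma Gr_sym: "Gr x y \<Longrightarrow> Gr y x" unfolding Gr_def by blast

lemma Gr_E0: assumes "Gr x y" shows "E0 x y"
proof -
  obtain a where "SS a x y \<or> SS a y x" using assms unfolding Gr_def RR_def by blast
  then have "\<forall>k>a. x k = y k" unfolding SS_def by auto
  then have "\<forall>k\<ge>Suc a. x k = y k" by auto
  then show ?thesis unfolding E0_def by blast
qed

lemma E0_trans: "E0 x y \<Longrightarrow> E0 y z \<Longrightarrow> E0 x z"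
proof -
  assume "E0 x y" "E0 y z"
  then obtain m1 m2 where "\<forall>n\<ge>m1. x n = y n" "\<forall>n\<ge>m2. y n = z n" unfolding E0_def by blast
  then have "\<forall>n\<ge>max m1 m2. x n = z n" by auto
  then show ?thesis unfolding E0_def by blast
qed

lemma E0_refl: "E0 x x" unfolding E0_def by blast

lemma joined_E0:
  assumes "joined Gr n x y" shows "E0 x y"
proof -
  obtain p where p: "p 0 = x" "p n = y" "\<forall>i<n. Gr (p i) (p (Suc i))"
    using assms unfolding joined_def by blast
  have "i \<le> n \<Longrightarrow> E0 x (p i)" for i
  proof (induction i)
    case 0 then show ?case using p E0_refl by simp
  next
    case (Suc i)
    then have "E0 x (p i)" by simp
    moreover have "E0 (p i) (p (Suc i))" using p(3) Suc.prems Gr_E0 by simp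
    ultimately show ?case using E0_trans by blast
  qed
  then show ?thesis using p by blast
qed

lemma joined_0: "joined G 0 x y \<longleftrightarrow> x = y"
  unfolding joined_def by (auto intro: exI[of _ "\<lambda>_. x"])

lemma joined_1: "joined G 1 x y \<longleftrightarrow> G x y"
proof
  assume "joined G 1 x y" then show "G x y" unfolding joined_def by auto
next
  assume "G x y" then show "joined G 1 x y" unfolding joined_def
    by (intro exI[of _ "\<lambda>i. if i = 0 then x else y"]) auto
qed

lemma joined_2: "G x z \<Longrightarrow> G z y \<Longrightarrow> joined G 2 x y"
  unfolding joined_def
  by (intro exI[of _ "\<lambda>i. if i = 0 then x else if i = 1 then z else y"])
     (auto simp: less_Suc_eq numeral_2_eq_2)

lemma E0_joined: assumes "E0 x y" shows "\<exists>n\<le>2. joined Gr n x y"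
proof (cases "x = y")
  case True
  then have "joined Gr 0 x y" using joined_0[of Gr x y] by simp
  then show ?thesis by (intro exI[where x=0]) simp
next
  case False
  obtain m where m: "\<forall>n\<ge>m. x n = y n" using assms unfolding E0_def by blast
  define z where "z = (\<lambda>k. if k < m then True else if k = m then False else x k)"
  have sx: "SS m z x" unfolding SS_def z_def by auto
  have sy: "SS m z y" unfolding SS_def z_def using m by auto
  show ?thesis
  proof (cases "z = x")
    case True
    then have "Gr x y" using sy False unfolding Gr_def RR_def by blast
    then have "joined Gr 1 x y" using joined_1[of Gr x y] by simp
    then show ?thesis by (intro exI[where x=1]) simp
  next
    case zx: False
    show ?thesis
    proof (cases "z = y")
      case True
      then have "Gr y x" using sx False unfolding Gr_def RR_def by blast
      then have "Gr x y" by (rule Gr_sym)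
      then have "joined Gr 1 x y" using joined_1[of Gr x y] by simp
    then show ?thesis by (intro exI[where x=1]) simp
    next
      case zy: False
      have "Gr x z" using sx zx unfolding Gr_def RR_def by blast
      moreover have "Gr z y" using sy zy unfolding Gr_def RR_def by blast
      ultimately have "joined Gr 2 x y" by (rule joined_2[of Gr])
      then show ?thesis by (intro exI[where x=2]) simp
    qed
  qed
qed

theorem proposition3p7:
  shows "delta02_graphable_diam E0 2"
  unfolding delta02_graphable_diam_def
proof (intro exI conjI)
  show "simple_graph Gr" unfolding simple_graph_def Gr_def by blast
  show "delta02 {(x, y). Gr x y}" by (rule delta_Gr)
  show conn: "graph_connected_rel Gr = E0"
  proof (intro ext)
    fix x y
    show "graph_connected_rel Gr x y = E0 x y"
      unfolding graph_connected_rel_def using joined_E0[of _ x y] E0_joined[of x y] by blast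
  qed
  show "has_diameter Gr 2"
    unfolding has_diameter_def
  proof (intro conjI allI impI)
    show "diam_bounded Gr 2" unfolding diam_bounded_def
      using conn E0_joined by auto
    fix j :: nat assume "j < 2"
    define x0 :: "nat \<Rightarrow> bool" where "x0 = (\<lambda>n. False)"
    define y0 :: "nat \<Rightarrow> bool" where "y0 = (\<lambda>n. n = 1)"
    have e: "E0 x0 y0" unfolding E0_def x0_def y0_def by (intro exI[of _ 2]) auto
    have ne: "x0 \<noteq> y0" unfolding x0_def y0_def by (metis zero_neq_one)
    have ng: "\<not> Gr x0 y0"
    proof
      assume "Gr x0 y0"
      then obtain a where "SS a x0 y0 \<or> SS a y0 x0" unfolding Gr_def RR_def by blast
      then have a0: "a = 0" unfolding SS_def x0_def y0_def by (cases a) auto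
      have "x0 1 \<noteq> y0 1" unfolding x0_def y0_def by simp
      then show False using \<open>SS a x0 y0 \<or> SS a y0 x0\<close> unfolding SS_def a0 by auto
    qed
    have "\<not> joined Gr n x0 y0" if "n \<le> j" for n
    proof -
      have "n = 0 \<or> n = 1" using that \<open>j < 2\<close> by auto
      then show ?thesis using joined_0[of Gr x0 y0] joined_1[of Gr x0 y0] ne ng by auto
    qed
    note nj = this
    show "\<not> diam_bounded Gr j" unfolding diam_bounded_def
    proof
      assume H: "\<forall>x y. graph_connected_rel Gr x y \<longrightarrow> (\<exists>n\<le>j. joined Gr n x y)"
      have "graph_connected_rel Gr x0 y0" using conn e by simp
      then obtain n where "n \<le> j" "joined Gr n x0 y0" using H by blast
      then show False using nj by blast
    qed
  qed
qed

end
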